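(* For all $x\ge y\ge 1$ and $n>x+y$, the maximum possible number of edges in any task-dependency graph produced by the $(x,y)$ edge-addition process on $n$ vertices is $\binom{n}{2}+1-\binom{x}{2}-\binom{y+1}{2}$.
   Context: A task-dependency graph is a finite directed acyclic graph (no loops, no multiple edges). A vertex is initial if it has in-degree $0$ and terminal if it has out-degree $0$ (an isolated vertex is both). An $(x,y)$ task-dependency graph has exactly $x$ initial and exactly $y$ terminal vertices. The $(x,y)$ edge-addition process on $n$ vertices: start with the empty graph on $\{1,\dots,n\}$ and repeatedly add, uniformly at random, an edge $(a,b)$ with $a<b$ not yet present; if an addition would cause fewer than $x$ initial vertices or fewer than $y$ terminal vertices, it is cancelled. The process halts if the graph after some edge addition is an $(x,y)$ task-dependency graph, or if no more edges can be added; the produced graph is the final graph (over all possible runs), not necessarily an $(x,y)$ task-dependency graph. *)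

theory Defs
  imports Main
begin

text \<open>Graphs on vertex set {1..n} are edge sets E of pairs (a,b) with a < b.\<close>

definition initial_vertices :: "nat \<Rightarrow> (nat \<times> nat) set \<Rightarrow> nat set" where
  "initial_vertices n E = {v \<in> {1..n}. \<forall>u. (u, v) \<notin> E}"

definition terminal_vertices :: "nat \<Rightarrow> (nat \<times> nat) set \<Rightarrow> nat set" where
  "terminal_vertices n E = {v \<in> {1..n}. \<forall>w. (v, w) \<notin> E}"

definition is_xy_tdg :: "nat \<Rightarrow> nat \<Rightarrow> nat \<Rightarrow> (nat \<times> nat) set \<Rightarrow> bool" where
  "is_xy_tdg n x y E \<longleftrightarrow>
     card (initial_vertices n E) = x \<and> card (terminal_vertices n E) = y"

text \<open>An edge addition that is possible (edge not present) and not cancelled.\<close>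
definition valid_addition :: "nat \<Rightarrow> nat \<Rightarrow> nat \<Rightarrow> (nat \<times> nat) set \<Rightarrow> nat \<times> nat \<Rightarrow> bool" where
  "valid_addition n x y E e \<longleftrightarrow>
     (fst e < snd e \<and> fst e \<in> {1..n} \<and> snd e \<in> {1..n} \<and> e \<notin> E \<and>
      card (initial_vertices n (insert e E)) \<ge> x \<and>
      card (terminal_vertices n (insert e E)) \<ge> y)"

text \<open>Graphs reachable by a run of the (x,y) edge-addition process that has not yet halted
  before the last addition.  The process halts once the graph after an edge addition is an
  (x,y) task-dependency graph.\<close>
inductive reachable :: "nat \<Rightarrow> nat \<Rightarrow> nat \<Rightarrow> (nat \<times> nat) set \<Rightarrow> bool"
  for n x y where
  start: "reachable n x y {}"
| step: "reachable n x y E \<Longrightarrow> (E = {} \<or> \<not> is_xy_tdg n x y E) \<Longrightarrow>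
          valid_addition n x y E e \<Longrightarrow> reachable n x y (insert e E)"

definition produced :: "nat \<Rightarrow> nat \<Rightarrow> nat \<Rightarrow> (nat \<times> nat) set \<Rightarrow> bool" where
  "produced n x y E \<longleftrightarrow> reachable n x y E \<and>
     ((E \<noteq> {} \<and> is_xy_tdg n x y E) \<or> (\<forall>e. \<not> valid_addition n x y E e))"

end

theory Submission
  imports Defs
begin
definition P2 :: "nat set \<Rightarrow> nat set set" where
  "P2 A = {B. B \<subseteq> A \<and> card B = 2}"

lemma card_P2: "finite A \<Longrightarrow> card (P2 A) = card A choose 2"
  by (simp add: P2_def n_subsets)

lemma finite_P2: "finite A \<Longrightarrow> finite (P2 A)"
  unfolding P2_def by (rule finite_subset[of _ "Pow A"]) auto

lemma P2_mono: "A \<subseteq> B \<Longrightarrow> P2 A \<subseteq> P2 B"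
  unfolding P2_def by auto

lemma choose2_le: "m choose 2 \<le> (m - 1) * m"
  by (simp add: choose_two mult.commute)

lemma count_lemma:
  fixes V A B :: "nat set" and N :: "nat set set" and c d :: nat
  assumes fin: "finite V" and AV: "A \<subseteq> V" and BV: "B \<subseteq> V" and cV: "c \<in> V" and cA: "c \<notin> A"
    and NP: "N \<subseteq> P2 V"
    and PA: "P2 A \<subseteq> N" and PB: "P2 B \<subseteq> N"
    and Q: "\<forall>t\<in>A-{d}. {c,t} \<in> N"
    and iso: "\<forall>v\<in>A\<inter>B. \<forall>w\<in>V. w \<noteq> v \<longrightarrow> {v,w} \<in> N"
    and sz: "card A + card B < card V"
  shows "(card A choose 2) + (card B choose 2) + card A \<le> card N + 1"
proof -
  define K where "K = A \<inter> B"
  define W where "W = V - (A \<union> B \<union> {c})"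
  define Q' where "Q' = (\<lambda>t. {c,t}) ` (A - {d})"
  define X1 where "X1 = P2 A \<union> Q'"
  define X3 where "X3 = (\<lambda>(v,w). {v,w}) ` (K \<times> W)"
  define e where "e = (if c \<in> B then 1 else 0::nat)"
  have finA: "finite A" using AV fin finite_subset by blast
  have finB: "finite B" using BV fin finite_subset by blast
  have finK: "finite K" using finA K_def by simp
  have finW: "finite W" using fin W_def by simp
  have finN: "finite N" using NP finite_P2[OF fin] finite_subset by blast
  have cardQ': "card Q' = card (A - {d})"
    unfolding Q'_def
  proof (rule card_image)
    show "inj_on (\<lambda>t. {c, t}) (A - {d})"
      unfolding inj_on_def using cA by (auto simp: doubleton_eq_iff)
  qed
  have cardAd: "card A \<le> card (A - {d}) + 1"
    using finA by (cases "d \<in> A") (auto simp: card_Diff_singleton card_gt_0_iff)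
  have disj1: "P2 A \<inter> Q' = {}"
    unfolding P2_def Q'_def using cA by auto
  have finQ': "finite Q'" unfolding Q'_def using finA by simp
  have cardX1: "card X1 = (card A choose 2) + card Q'"
    unfolding X1_def using disj1 finQ' finite_P2[OF finA] card_P2[OF finA]
    by (simp add: card_Un_disjoint)
  have KW: "K \<inter> W = {}" unfolding K_def W_def by auto
  have cardX3: "card X3 = card K * card W"
  proof -
    have "inj_on (\<lambda>(v,w). {v,w}) (K \<times> W)"
      unfolding inj_on_def using KW by (auto simp: doubleton_eq_iff)
    then show ?thesis unfolding X3_def by (simp add: card_image card_cartesian_product)
  qed
  have int1: "X1 \<inter> P2 B \<subseteq> P2 (K \<union> ({c} \<inter> B))"
    unfolding X1_def Q'_def P2_def K_def by auto
  have cKc: "card (K \<union> ({c} \<inter> B)) = card K + e"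
    unfolding e_def using cA finK K_def by auto
  have int1c: "card (X1 \<inter> P2 B) \<le> (card K + e) choose 2"
  proof -
    have "card (X1 \<inter> P2 B) \<le> card (P2 (K \<union> ({c} \<inter> B)))"
      by (rule card_mono[OF finite_P2 int1]) (use finK in simp)
    also have "\<dots> = (card K + e) choose 2" using finK cKc card_P2 by simp
    finally show ?thesis .
  qed
  have disj3: "X3 \<inter> (X1 \<union> P2 B) = {}"
    unfolding X3_def X1_def Q'_def P2_def W_def by (auto simp: doubleton_eq_iff)
  have sub: "X1 \<union> P2 B \<union> X3 \<subseteq> N"
  proof -
    have "Q' \<subseteq> N" unfolding Q'_def using Q by auto
    moreover have "X3 \<subseteq> N"
    proof
      fix z assume "z \<in> X3"
      then obtain v w where "v \<in> K" "w \<in> W" "z = {v,w}" unfolding X3_def by auto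
      then show "z \<in> N" using iso KW unfolding K_def W_def by auto
    qed
    ultimately show ?thesis unfolding X1_def using PA PB by auto
  qed
  have finX1: "finite X1" unfolding X1_def using finQ' finite_P2[OF finA] by simp
  have finX3: "finite X3" unfolding X3_def using finK finW by simp
  have c12: "card (X1 \<union> P2 B) + card (X1 \<inter> P2 B) = card X1 + (card B choose 2)"
    using card_Un_Int[OF finX1 finite_P2[OF finB]] card_P2[OF finB] by simp
  have cU: "card (X1 \<union> P2 B \<union> X3) = card (X1 \<union> P2 B) + card X3"
    using disj3 finX1 finX3 finite_P2[OF finB] by (simp add: card_Un_disjoint inf_commute)
  have cN: "card (X1 \<union> P2 B \<union> X3) \<le> card N" using card_mono[OF finN sub] .
  have cAB: "card (A \<union> B) + card K = card A + card B"
    unfolding K_def using card_Un_Int[OF finA finB] by simp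
  have cABc: "card (A \<union> B \<union> {c}) = card (A \<union> B) + 1 - e"
    unfolding e_def using cA finA finB by (auto simp: insert_absorb)
  have cW: "card W = card V - card (A \<union> B \<union> {c})"
    unfolding W_def using AV BV cV fin by (subst card_Diff_subset) (auto intro: finite_subset)
  have Wge: "card K + e \<le> card W" using cW cABc cAB sz unfolding e_def by auto
  have eK: "e \<le> 1" unfolding e_def by simp
  have key: "(card K + e) choose 2 \<le> card K * card W"
  proof -
    have "(card K + e) choose 2 \<le> (card K + e - 1) * (card K + e)" by (rule choose2_le)
    also have "\<dots> \<le> card K * card W" using eK Wge by (intro mult_mono) auto
    finally show ?thesis .
  qed
  show ?thesis using cardX1 cardQ' cardAd c12 cU cN cardX3 int1c key by linarith
qed

definition Pairs :: "nat \<Rightarrow> (nat \<times> nat) set" where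
  "Pairs n = {(u,v). u < v \<and> u \<in> {1..n} \<and> v \<in> {1..n}}"

definition NE :: "nat \<Rightarrow> (nat \<times> nat) set \<Rightarrow> nat set set" where
  "NE n E = (\<lambda>(u,v). {u,v}) ` (Pairs n - E)"

lemma finite_Pairs: "finite (Pairs n)"
  unfolding Pairs_def by (rule finite_subset[of _ "{1..n} \<times> {1..n}"]) auto

lemma inj_pairs: "inj_on (\<lambda>(u,v). {u,v::nat}) (Pairs n)"
  unfolding inj_on_def Pairs_def by (auto simp: doubleton_eq_iff)

lemma image_Pairs: "(\<lambda>(u,v). {u,v}) ` Pairs n = P2 {1..n}"
proof
  show "(\<lambda>(u,v). {u,v}) ` Pairs n \<subseteq> P2 {1..n}"
    unfolding Pairs_def P2_def by auto
  show "P2 {1..n} \<subseteq> (\<lambda>(u,v). {u,v}) ` Pairs n"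
  proof
    fix B assume "B \<in> P2 {1..n}"
    then have B: "B \<subseteq> {1..n}" "card B = 2" unfolding P2_def by auto
    then obtain p q where pq: "B = {p,q}" "p \<noteq> q" by (auto simp: card_2_iff)
    show "B \<in> (\<lambda>(u,v). {u,v}) ` Pairs n"
    proof (cases "p < q")
      case True
      then show ?thesis using pq B unfolding Pairs_def by (auto intro!: image_eqI[of _ _ "(p,q)"])
    next
      case False
      then have "q < p" using pq by simp
      then show ?thesis using pq B unfolding Pairs_def
        by (auto intro!: image_eqI[of _ _ "(q,p)"])
    qed
  qed
qed

lemma card_Pairs: "card (Pairs n) = n choose 2"
proof -
  have "card (Pairs n) = card ((\<lambda>(u,v). {u,v}) ` Pairs n)"
    using card_image[OF inj_pairs] by simp
  also have "\<dots> = n choose 2" using image_Pairs card_P2[of "{1..n}"] by simp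
  finally show ?thesis .
qed

lemma card_E_NE: assumes "E \<subseteq> Pairs n" shows "card E + card (NE n E) = n choose 2"
proof -
  have "card (NE n E) = card (Pairs n - E)"
    unfolding NE_def by (rule card_image) (rule inj_on_subset[OF inj_pairs], auto)
  also have "\<dots> = card (Pairs n) - card E"
    using assms finite_Pairs by (simp add: card_Diff_subset finite_subset)
  finally show ?thesis using card_mono[OF finite_Pairs assms] card_Pairs by simp
qed

lemma NE_sub: "NE n E \<subseteq> P2 {1..n}"
  unfolding NE_def using image_Pairs by auto

lemma pair_in_NE:
  assumes "u \<in> {1..n}" "v \<in> {1..n}" "u < v" "(u,v) \<notin> E"
  shows "{u,v} \<in> NE n E" "{v,u} \<in> NE n E"
proof -
  show "{u,v} \<in> NE n E" unfolding NE_def Pairs_def using assms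
    by (auto intro!: image_eqI[of _ _ "(u,v)"])
  then show "{v,u} \<in> NE n E" by (simp add: insert_commute)
qed

lemma P2_sub_NE:
  assumes "A \<subseteq> {1..n}" "\<forall>p\<in>A. \<forall>q\<in>A. p < q \<longrightarrow> (p,q) \<notin> E"
  shows "P2 A \<subseteq> NE n E"
proof
  fix B assume "B \<in> P2 A"
  then have B: "B \<subseteq> A" "card B = 2" unfolding P2_def by auto
  then obtain p q where pq: "B = {p,q}" "p \<noteq> q" by (auto simp: card_2_iff)
  have pqn: "p \<in> {1..n}" "q \<in> {1..n}" "p \<in> A" "q \<in> A" using B pq assms(1) by auto
  show "B \<in> NE n E"
  proof (cases "p < q")
    case True then show ?thesis using pq pqn assms(2) pair_in_NE(1)[of p n q E] by auto
  next
    case False then have "q < p" using pq by simp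
    then show ?thesis using pq pqn assms(2) pair_in_NE(2)[of q n p E] by auto
  qed
qed

lemma init_insert: "initial_vertices n (insert (a,b) E) = initial_vertices n E - {b}"
  unfolding initial_vertices_def by auto

lemma term_insert: "terminal_vertices n (insert (a,b) E) = terminal_vertices n E - {a}"
  unfolding terminal_vertices_def by auto

lemma init_anti: "E \<subseteq> F \<Longrightarrow> initial_vertices n F \<subseteq> initial_vertices n E"
  unfolding initial_vertices_def by auto

lemma term_anti: "E \<subseteq> F \<Longrightarrow> terminal_vertices n F \<subseteq> terminal_vertices n E"
  unfolding terminal_vertices_def by auto

lemma reach_inv:
  assumes "reachable n x y E" "x \<le> n" "y \<le> n"
  shows "E \<subseteq> Pairs n \<and> x \<le> card (initial_vertices n E) \<and> y \<le> card (terminal_vertices n E)"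
  using assms
proof (induction rule: reachable.induct)
  case start
  have "initial_vertices n {} = {1..n}" "terminal_vertices n {} = {1..n}"
    unfolding initial_vertices_def terminal_vertices_def by auto
  then show ?case using start by simp
next
  case (step E e)
  then show ?case unfolding valid_addition_def Pairs_def by auto
qed

lemma ub:
  assumes y1: "1 \<le> y" and yx: "y \<le> x" and n: "x + y < n" and pr: "produced n x y E"
  shows "card E + (x choose 2) + (y choose 2) + y \<le> (n choose 2) + 1"
proof -
  define I where "I = initial_vertices n E"
  define T where "T = terminal_vertices n E"
  define N where "N = NE n E"
  have re: "reachable n x y E" using pr unfolding produced_def by simp
  have inv: "E \<subseteq> Pairs n" "x \<le> card I" "y \<le> card T"
    using reach_inv[OF re] n unfolding I_def T_def by auto
  have cEN: "card E + card N = n choose 2" using card_E_NE[OF inv(1)] N_def by simp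
  have IV: "I \<subseteq> {1..n}" and TV: "T \<subseteq> {1..n}"
    unfolding I_def T_def initial_vertices_def terminal_vertices_def by auto
  have finI: "finite I" and finT: "finite T" using IV TV finite_subset by auto
  have Imem: "\<And>v u. v \<in> I \<Longrightarrow> (u,v) \<notin> E" unfolding I_def initial_vertices_def by auto
  have Tmem: "\<And>v u. v \<in> T \<Longrightarrow> (v,u) \<notin> E" unfolding T_def terminal_vertices_def by auto
  have Iin: "\<And>v. v \<in> {1..n} \<Longrightarrow> (\<forall>u. (u,v) \<notin> E) \<Longrightarrow> v \<in> I"
    unfolding I_def initial_vertices_def by auto
  have Tin: "\<And>v. v \<in> {1..n} \<Longrightarrow> (\<forall>u. (v,u) \<notin> E) \<Longrightarrow> v \<in> T"
    unfolding T_def terminal_vertices_def by auto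
  have NP: "N \<subseteq> P2 {1..n}" using NE_sub N_def by simp
  have PI: "P2 I \<subseteq> N" unfolding N_def by (rule P2_sub_NE) (use IV Imem in auto)
  have PT: "P2 T \<subseteq> N" unfolding N_def by (rule P2_sub_NE) (use TV Tmem in auto)
  have nonadj: "\<And>u v. u \<in> {1..n} \<Longrightarrow> v \<in> {1..n} \<Longrightarrow> u \<noteq> v \<Longrightarrow> (u,v) \<notin> E \<Longrightarrow> (v,u) \<notin> E
     \<Longrightarrow> {u,v} \<in> N"
  proof -
    fix u v assume a: "u \<in> {1..n}" "v \<in> {1..n}" "u \<noteq> v" "(u,v) \<notin> E" "(v,u) \<notin> E"
    show "{u,v} \<in> N"
    proof (cases "u < v")
      case True then show ?thesis using a pair_in_NE(1)[of u n v E] N_def by auto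
    next
      case False then have "v < u" using a by simp
      then show ?thesis using a pair_in_NE(2)[of v n u E] N_def by auto
    qed
  qed
  have iso: "\<And>A B. A \<inter> B \<subseteq> I \<inter> T \<Longrightarrow> \<forall>v\<in>A\<inter>B. \<forall>w\<in>{1..n}. w \<noteq> v \<longrightarrow> {v,w} \<in> N"
  proof (intro ballI impI)
    fix A B v w assume "A \<inter> B \<subseteq> I \<inter> T" "v \<in> A \<inter> B" "w \<in> {1..n}" "w \<noteq> v"
    then have vv: "v \<in> I" "v \<in> T" "v \<in> {1..n}" using IV by auto
    have "(v,w) \<notin> E" using Tmem[OF vv(2)] .
    moreover have "(w,v) \<notin> E" using Imem[OF vv(1)] .
    ultimately show "{v,w} \<in> N" using nonadj[of v w] vv \<open>w \<in> {1..n}\<close> \<open>w \<noteq> v\<close> by simp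
  qed
  have cV: "card {1..n} = n" by simp
  have goal: "(x choose 2) + (y choose 2) + y \<le> card N + 1"
  proof (cases "E \<noteq> {} \<and> is_xy_tdg n x y E")
    case True
    then have cI: "card I = x" and cT: "card T = y" unfolding is_xy_tdg_def I_def T_def by auto
    from re True obtain E0 e where E: "E = insert e E0" and re0: "reachable n x y E0"
      and nt: "E0 = {} \<or> \<not> is_xy_tdg n x y E0" and va: "valid_addition n x y E0 e"
      by (cases rule: reachable.cases) auto
    obtain a b where e: "e = (a,b)" by force
    have abE: "(a,b) \<in> E" using E e by simp
    have ab: "a < b" "a \<in> {1..n}" "b \<in> {1..n}" using va e unfolding valid_addition_def by auto
    have key: "(\<forall>w. (a,w) \<in> E \<longrightarrow> w = b) \<or> (\<forall>u. (u,b) \<in> E \<longrightarrow> u = a)"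
    proof (rule ccontr)
      assume "\<not> ?thesis"
      then obtain w u where w: "(a,w) \<in> E" "w \<noteq> b" and u: "(u,b) \<in> E" "u \<noteq> a" by blast
      have w0: "(a,w) \<in> E0" and u0: "(u,b) \<in> E0" using w u E e by auto
      have "initial_vertices n E0 = initial_vertices n E"
        unfolding E e init_insert using u0 unfolding initial_vertices_def by auto
      moreover have "terminal_vertices n E0 = terminal_vertices n E"
        unfolding E e term_insert using w0 unfolding terminal_vertices_def by auto
      ultimately have "is_xy_tdg n x y E0" using True unfolding is_xy_tdg_def by simp
      moreover have "E0 \<noteq> {}" using w0 by auto
      ultimately show False using nt by simp
    qed
    show ?thesis
    proof (cases "\<forall>w. (a,w) \<in> E \<longrightarrow> w = b")
      case True
      have aT: "a \<notin> T" using Tmem abE by blast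
      have Q: "\<forall>t\<in>T-{b}. {a,t} \<in> N"
      proof
        fix t assume t: "t \<in> T - {b}"
        then have "t \<noteq> a" using aT by auto
        moreover have "(a,t) \<notin> E" using True t by auto
        moreover have "(t,a) \<notin> E" using Tmem t by auto
        ultimately show "{a,t} \<in> N" using nonadj[of a t] ab t TV by auto
      qed
      have "(card T choose 2) + (card I choose 2) + card T \<le> card N + 1"
        by (rule count_lemma[OF _ TV IV ab(2) aT NP PT PI Q iso]) (use cI cT n in auto)
      then show ?thesis using cI cT by simp
    next
      case False
      then have K2: "\<forall>u. (u,b) \<in> E \<longrightarrow> u = a" using key by blast
      have bI: "b \<notin> I" using Imem abE by blast
      have Q: "\<forall>t\<in>I-{a}. {b,t} \<in> N"
      proof
        fix t assume t: "t \<in> I - {a}"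
        then have "t \<noteq> b" using bI by auto
        moreover have "(t,b) \<notin> E" using K2 t by auto
        moreover have "(b,t) \<notin> E" using Imem t by auto
        ultimately show "{b,t} \<in> N" using nonadj[of b t] ab t IV by auto
      qed
      have "(card I choose 2) + (card T choose 2) + card I \<le> card N + 1"
        by (rule count_lemma[OF _ IV TV ab(3) bI NP PI PT Q iso]) (use cI cT n in auto)
      then show ?thesis using cI cT yx by simp
    qed
  next
    case False
    then have nv: "\<forall>e. \<not> valid_addition n x y E e" using pr unfolding produced_def by auto
    have nv2: "\<And>u v. u < v \<Longrightarrow> u \<in> {1..n} \<Longrightarrow> v \<in> {1..n} \<Longrightarrow> (u,v) \<notin> E \<Longrightarrow>
        card (I - {v}) < x \<or> card (T - {u}) < y"
    proof -
      fix u v assume a: "u < v" "u \<in> {1..n}" "v \<in> {1..n}" "(u,v) \<notin> E"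
      have "\<not> valid_addition n x y E (u,v)" using nv by blast
      then show "card (I - {v}) < x \<or> card (T - {u}) < y"
        using a unfolding valid_addition_def I_def T_def init_insert term_insert by auto
    qed
    have cD: "\<And>S z. finite S \<Longrightarrow> card S \<le> card (S - {z}) + 1"
    proof -
      fix S :: "'a set" and z assume "finite S"
      then show "card S \<le> card (S - {z}) + 1"
        by (cases "z \<in> S") (auto simp: card_Diff_singleton card_gt_0_iff)
    qed
    have Ene: "E \<noteq> {}"
    proof
      assume "E = {}"
      then have "I = {1..n}" "T = {1..n}" unfolding I_def T_def initial_vertices_def terminal_vertices_def by auto
      moreover have "card ({1..n} - {2::nat}) = n - 1" using n yx y1 by (simp add: card_Diff_singleton)
      moreover have "card ({1..n} - {1::nat}) = n - 1" using n yx y1 by (simp add: card_Diff_singleton)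
      ultimately show False using nv2[of 1 2] n yx y1 \<open>E = {}\<close> by auto
    qed
    then have ntd: "card I \<noteq> x \<or> card T \<noteq> y" using False unfolding is_xy_tdg_def I_def T_def by auto
    show ?thesis
    proof (cases "card I = x")
      case cI: True
      then have cT: "card T \<ge> y + 1" using ntd inv by auto
      have Tne: "T \<noteq> {}" using cT by auto
      define m where "m = Min T"
      have mT: "m \<in> T" using Tne finT m_def by simp
      have T'I: "T - {m} \<subseteq> I"
      proof
        fix t assume t: "t \<in> T - {m}"
        then have "m \<le> t" using m_def Min_le[OF finT] by simp
        then have mt: "m < t" using t by auto
        have "card (T - {m}) + 1 = card T" using mT finT card_gt_0_iff[of T] by (auto simp: card_Diff_singleton)
        then have "\<not> card (T - {m}) < y" using cT by simp
        moreover have "m \<in> {1..n}" "t \<in> {1..n}" using mT t TV by auto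
        ultimately have "card (I - {t}) < x" using nv2[of m t] mt Tmem[OF mT] by auto
        then show "t \<in> I" using cI by (cases "t \<in> I") auto
      qed
      have "card (T - {m}) \<ge> y" using cT mT finT card_gt_0_iff[of T] by (auto simp: card_Diff_singleton)
      then obtain A where A: "A \<subseteq> T - {m}" "card A = y"
        by (meson obtain_subset_with_card_n)
      have AV: "A \<subseteq> {1..n}" using A TV by auto
      have mA: "m \<notin> A" using A by auto
      have PA: "P2 A \<subseteq> N" using P2_mono[of A T] A PT by auto
      have Q: "\<forall>t\<in>A-{m}. {m,t} \<in> N"
      proof
        fix t assume t: "t \<in> A - {m}"
        then have "t \<in> I" "t \<in> T" using A T'I by auto
        moreover have "(m,t) \<notin> E" using Tmem[OF mT] .
        moreover have "m \<noteq> t" "m \<in> {1..n}" "t \<in> {1..n}" using mA t mT TV AV by auto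
        ultimately show "{m,t} \<in> N" using nonadj[of m t] Tmem by simp
      qed
      have "(card A choose 2) + (card I choose 2) + card A \<le> card N + 1"
        by (rule count_lemma[OF _ AV IV _ mA NP PA PI Q iso]) (use cI A n mT TV T'I in auto)
      then show ?thesis using cI A by simp
    next
      case cIx: False
      then have cI: "card I \<ge> x + 1" using inv by auto
      have cT: "card T = y"
      proof (rule ccontr)
        assume "card T \<noteq> y"
        then have cT: "card T \<ge> y + 1" using inv by auto
        have "card I \<ge> 2" using cI yx y1 by simp
        then obtain p where p: "p \<in> I" by fastforce
        have "card (I - {p}) \<ge> 1" using cD[OF finI, of p] \<open>card I \<ge> 2\<close> by linarith
        then have "I - {p} \<noteq> {}" by (metis card.empty not_one_le_zero)
        then obtain q where q: "q \<in> I - {p}" by blast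
        have pq: "p \<in> I" "q \<in> I" "p \<noteq> q" using p q by auto
        then have "p < q \<or> q < p" by auto
        then obtain u v where uv: "u \<in> I" "v \<in> I" "u < v" using pq by blast
        have "card (I - {v}) < x \<or> card (T - {u}) < y" using nv2[of u v] uv(3) Imem[OF uv(2)] uv(1,2) IV by blast
        then show False using cD[OF finI, of v] cD[OF finT, of u] cI cT by auto
      qed
      have Ine: "I \<noteq> {}" using cI by auto
      define m where "m = Max I"
      have mI: "m \<in> I" using Ine finI m_def by simp
      have I'T: "I - {m} \<subseteq> T"
      proof
        fix t assume t: "t \<in> I - {m}"
        then have "t \<le> m" using m_def Max_ge[OF finI] by simp
        then have mt: "t < m" using t by auto
        have "card (I - {m}) + 1 = card I" using mI finI card_gt_0_iff[of I] by (auto simp: card_Diff_singleton)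
        then have "\<not> card (I - {m}) < x" using cI by simp
        moreover have "m \<in> {1..n}" "t \<in> {1..n}" using mI t IV by auto
        ultimately have "card (T - {t}) < y" using nv2[of t m] mt Imem[OF mI] by auto
        then show "t \<in> T" using cT by (cases "t \<in> T") auto
      qed
      have "card (I - {m}) \<ge> x" using cI mI finI card_gt_0_iff[of I] by (auto simp: card_Diff_singleton)
      then obtain A where A: "A \<subseteq> I - {m}" "card A = x"
        by (meson obtain_subset_with_card_n)
      have AV: "A \<subseteq> {1..n}" using A IV by auto
      have mA: "m \<notin> A" using A by auto
      have PA: "P2 A \<subseteq> N" using P2_mono[of A I] A PI by auto
      have Q: "\<forall>t\<in>A-{m}. {m,t} \<in> N"
      proof
        fix t assume t: "t \<in> A - {m}"
        then have "t \<in> I" "t \<in> T" using A I'T by auto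
        moreover have "(t,m) \<notin> E" using Imem[OF mI] .
        moreover have "m \<noteq> t" "m \<in> {1..n}" "t \<in> {1..n}" using mA t mI IV AV by auto
        ultimately show "{m,t} \<in> N" using nonadj[of m t] Imem by simp
      qed
      have "(card A choose 2) + (card T choose 2) + card A \<le> card N + 1"
        by (rule count_lemma[OF _ AV TV _ mA NP PA PT Q iso]) (use cT A n mI IV I'T in auto)
      then show ?thesis using cT A yx by simp
    qed
  qed
  show ?thesis using goal cEN by simp
qed

lemma lb:
  assumes y1: "1 \<le> y" and yx: "y \<le> x" and n: "x + y < n"
  shows "\<exists>E. produced n x y E \<and> (n choose 2) + 1 \<le> card E + (x choose 2) + (y choose 2) + y"
proof -
  define E' where "E' = {(u,v). 1 \<le> u \<and> u < v \<and> v \<le> n \<and> x < v \<and> u < n - y}"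
  define E where "E = insert (n - y, n) E'"
  have IE': "initial_vertices n E' = {1..x}"
  proof -
    have "\<And>v. v \<in> {1..n} \<Longrightarrow> x < v \<Longrightarrow> (1,v) \<in> E'" unfolding E'_def using n y1 yx by auto
    then show ?thesis unfolding initial_vertices_def E'_def using n by fastforce
  qed
  have IE: "initial_vertices n E = {1..x}"
    unfolding E_def init_insert IE' using n by auto
  have TE': "terminal_vertices n E' = {n-y..n}"
  proof -
    have "\<And>v. v \<in> {1..n} \<Longrightarrow> v < n - y \<Longrightarrow> (v,n) \<in> E'" unfolding E'_def using n y1 yx by auto
    then show ?thesis unfolding terminal_vertices_def E'_def using n by fastforce
  qed
  have TE: "terminal_vertices n E = {n-y+1..n}"
    unfolding E_def term_insert TE' using n by auto
  have cTE': "card (terminal_vertices n E') = y + 1" using TE' n by simp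
  have E'P: "E' \<subseteq> Pairs n" unfolding E'_def Pairs_def by auto
  have reachF: "\<And>F. finite F \<Longrightarrow> F \<subseteq> E' \<Longrightarrow> reachable n x y F"
  proof -
    fix F :: "(nat \<times> nat) set"
    assume "finite F" "F \<subseteq> E'"
    then show "reachable n x y F"
    proof (induction F rule: finite_induct)
      case empty show ?case by (rule reachable.start)
    next
      case (insert e F)
      have r: "reachable n x y F" using insert by simp
      have fin1: "finite (terminal_vertices n F)" "finite (initial_vertices n (insert e F))"
        "finite (terminal_vertices n (insert e F))"
        unfolding terminal_vertices_def initial_vertices_def by auto
      have "card (terminal_vertices n E') \<le> card (terminal_vertices n F)"
        by (rule card_mono[OF fin1(1) term_anti]) (use insert in auto)
      then have nt: "\<not> is_xy_tdg n x y F" unfolding is_xy_tdg_def using cTE' by auto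
      have "card (initial_vertices n E') \<le> card (initial_vertices n (insert e F))"
        by (rule card_mono[OF fin1(2) init_anti]) (use insert in auto)
      moreover have "card (terminal_vertices n E') \<le> card (terminal_vertices n (insert e F))"
        by (rule card_mono[OF fin1(3) term_anti]) (use insert in auto)
      moreover have "e \<in> Pairs n" using insert E'P by auto
      ultimately have "valid_addition n x y F e"
        unfolding valid_addition_def Pairs_def using insert IE' cTE' by auto
      then show ?case using reachable.step[OF r] nt by simp
    qed
  qed
  have finE': "finite E'" using E'P finite_Pairs finite_subset by blast
  have rE': "reachable n x y E'" using reachF[OF finE'] by simp
  have ntE': "\<not> is_xy_tdg n x y E'" unfolding is_xy_tdg_def using cTE' by simp
  have notin: "(n-y, n) \<notin> E'" unfolding E'_def by auto
  have vE: "valid_addition n x y E' (n-y, n)"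
    unfolding valid_addition_def using notin n y1 IE TE E_def by auto
  have rE: "reachable n x y E" unfolding E_def using reachable.step[OF rE'] ntE' vE by simp
  have tdg: "is_xy_tdg n x y E" unfolding is_xy_tdg_def IE TE using n by simp
  have prE: "produced n x y E" unfolding produced_def using rE tdg E_def by auto
  have EP: "E \<subseteq> Pairs n" using E'P n y1 unfolding E_def Pairs_def by auto
  have cEN: "card E + card (NE n E) = n choose 2" using card_E_NE[OF EP] .
  define Q where "Q = (\<lambda>t. {n-y, t}) ` {n-y+1..n-1}"
  have NEsub: "NE n E \<subseteq> P2 {1..x} \<union> P2 {n-y+1..n} \<union> Q"
  proof
    fix z assume "z \<in> NE n E"
    then obtain u v where z: "z = {u,v}" "(u,v) \<in> Pairs n" "(u,v) \<notin> E" unfolding NE_def by auto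
    then have uv: "u < v" "1 \<le> u" "v \<le> n" unfolding Pairs_def by auto
    have c2: "card {u,v} = 2" using uv by simp
    have "v \<le> x \<or> n - y < u \<or> (u = n - y \<and> v \<noteq> n)"
      using z(3) uv unfolding E_def E'_def by auto
    then show "z \<in> P2 {1..x} \<union> P2 {n-y+1..n} \<union> Q"
    proof (elim disjE)
      assume "v \<le> x" then show ?thesis using z uv c2 unfolding P2_def by auto
    next
      assume "n - y < u" then show ?thesis using z uv c2 unfolding P2_def by auto
    next
      assume "u = n - y \<and> v \<noteq> n" then show ?thesis using z uv unfolding Q_def by auto
    qed
  qed
  have "card (NE n E) \<le> card (P2 {1..x} \<union> P2 {n-y+1..n} \<union> Q)"
    by (rule card_mono[OF _ NEsub]) (simp add: finite_P2 Q_def)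
  also have "\<dots> \<le> card (P2 {1..x}) + card (P2 {n-y+1..n}) + card Q"
    by (meson card_Un_le le_trans add_le_mono le_refl)
  also have "\<dots> \<le> (x choose 2) + (y choose 2) + (y - 1)"
  proof -
    have "card Q \<le> card {n-y+1..n-1}" unfolding Q_def by (rule card_image_le) simp
    also have "\<dots> = y - 1" using n y1 by simp
    finally show ?thesis using card_P2[of "{1..x}"] card_P2[of "{n-y+1..n}"] n by simp
  qed
  finally have "card (NE n E) \<le> (x choose 2) + (y choose 2) + (y - 1)" .
  then show ?thesis using prE cEN y1 by (intro exI[of _ E]) auto
qed

theorem mainTheorem14:
  fixes x y n :: nat
  assumes "y \<ge> 1" and "x \<ge> y" and "n > x + y"
  shows "int (Max {card E | E. produced n x y E}) =
           int (n choose 2) + 1 - int (x choose 2) - int ((y + 1) choose 2)"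
proof -
  define S where "S = {card E | E. produced n x y E}"
  obtain E0 where E0: "produced n x y E0"
    and c0: "(n choose 2) + 1 \<le> card E0 + (x choose 2) + (y choose 2) + y"
    using lb[OF assms] by blast
  have ubS: "\<And>s. s \<in> S \<Longrightarrow> s \<le> card E0"
  proof -
    fix s assume "s \<in> S"
    then obtain E where "s = card E" "produced n x y E" unfolding S_def by auto
    then show "s \<le> card E0" using ub[OF assms \<open>produced n x y E\<close>] c0 by simp
  qed
  have finS: "finite S" using ubS finite_subset[of S "{..card E0}"] by auto
  have "Max S = card E0"
    by (rule Max_eqI[OF finS]) (use ubS E0 S_def in auto)
  moreover have "card E0 + (x choose 2) + (y choose 2) + y = (n choose 2) + 1"
    using c0 ub[OF assms E0] by simp
  moreover have "(y + 1) choose 2 = (y choose 2) + y" by (simp add: numeral_2_eq_2)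
  ultimately show ?thesis unfolding S_def by simp
qed

end
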